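(* Let $G=(V,E)$ be a vertex-color-avoiding connected graph on $n\ge 2$ vertices such that $G-e$ is not vertex-color-avoiding connected for any $e\in E$. Then $|E|\le 2n-3$, and if the vertices are colored with exactly $k=3$ colors, this upper bound is sharp (attained by suitable such graphs). Moreover, if the vertices are colored with exactly $k=1$ or $k=2$ colors, then $|E|=n-1$.
   Context: Vertex-colorings are arbitrary (not necessarily proper). Two vertices $u,v$ are vertex-$c$-avoiding connected (for a color $c$) if there is a $u$-$v$ path and either at least one of $u,v$ has color $c$ or some $u$-$v$ path contains no vertex of color $c$. A graph is vertex-color-avoiding connected if any two vertices are vertex-$c$-avoiding connected for every color $c$. $G-e$ denotes $G$ with edge $e$ removed. *)

theory Defs
  imports Main
begin

definition simple_graph :: "'a set \<Rightarrow> 'a set set \<Rightarrow> bool" where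
  "simple_graph V E \<longleftrightarrow> finite V \<and> (\<forall>e\<in>E. e \<subseteq> V \<and> card e = 2)"

definition path_within :: "'a set set \<Rightarrow> 'a set \<Rightarrow> 'a \<Rightarrow> 'a \<Rightarrow> bool" where
  "path_within E S u v \<longleftrightarrow> (\<exists>p. p \<noteq> [] \<and> hd p = u \<and> last p = v \<and> distinct p \<and> set p \<subseteq> S \<and>
      (\<forall>i. Suc i < length p \<longrightarrow> {p ! i, p ! Suc i} \<in> E))"

definition vertex_c_avoiding_connected ::
  "'a set \<Rightarrow> 'a set set \<Rightarrow> ('a \<Rightarrow> 'b) \<Rightarrow> 'b \<Rightarrow> 'a \<Rightarrow> 'a \<Rightarrow> bool" where
  "vertex_c_avoiding_connected V E col c u v \<longleftrightarrow>
     path_within E V u v \<and>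
     (col u = c \<or> col v = c \<or> path_within E {w \<in> V. col w \<noteq> c} u v)"

definition vca_connected :: "'a set \<Rightarrow> 'a set set \<Rightarrow> ('a \<Rightarrow> 'b) \<Rightarrow> bool" where
  "vca_connected V E col \<longleftrightarrow>
     (\<forall>u\<in>V. \<forall>v\<in>V. \<forall>c. vertex_c_avoiding_connected V E col c u v)"

definition minimal_vca_connected :: "'a set \<Rightarrow> 'a set set \<Rightarrow> ('a \<Rightarrow> 'b) \<Rightarrow> bool" where
  "minimal_vca_connected V E col \<longleftrightarrow>
     vca_connected V E col \<and> (\<forall>e\<in>E. \<not> vca_connected V (E - {e}) col)"

end

theory Submission
  imports Defs
begin


definition erel :: "'a set set \<Rightarrow> 'a set \<Rightarrow> 'a \<Rightarrow> 'a \<Rightarrow> bool" where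
  "erel E T a b \<longleftrightarrow> {a,b} \<in> E \<and> a \<in> T \<and> b \<in> T"

abbreviation reach :: "'a set set \<Rightarrow> 'a set \<Rightarrow> 'a \<Rightarrow> 'a \<Rightarrow> bool" where
  "reach E T \<equiv> (erel E T)\<^sup>*\<^sup>*"

definition cmpt :: "'a set set \<Rightarrow> 'a set \<Rightarrow> 'a \<Rightarrow> 'a set" where
  "cmpt E T x = {y. reach E T x y}"

definition kap :: "'a set set \<Rightarrow> 'a set \<Rightarrow> nat" where
  "kap E T = card (cmpt E T ` T)"

lemma rel_sym: "erel E T a b \<Longrightarrow> erel E T b a"
  by (auto simp: erel_def insert_commute)

lemma reach_sym: "reach E T a b \<Longrightarrow> reach E T b a"
proof (induction rule: rtranclp_induct)
  case base then show ?case by simp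
next
  case (step y z)
  then show ?case by (meson converse_rtranclp_into_rtranclp rel_sym)
qed

lemma reach_in: "reach E T a b \<Longrightarrow> a \<noteq> b \<Longrightarrow> a \<in> T \<and> b \<in> T"
  by (induction rule: rtranclp_induct) (auto simp: erel_def)

lemma reach_mono_E: "F \<subseteq> F' \<Longrightarrow> reach F T a b \<Longrightarrow> reach F' T a b"
proof -
  assume "F \<subseteq> F'"
  then have "erel F T \<le> erel F' T" by (auto simp: erel_def)
  then show "reach F T a b \<Longrightarrow> reach F' T a b" using rtranclp_mono by blast
qed

lemma reach_mono_T: "T \<subseteq> T' \<Longrightarrow> reach F T a b \<Longrightarrow> reach F T' a b"
proof -
  assume "T \<subseteq> T'"
  then have "erel F T \<le> erel F T'" by (auto simp: erel_def)
  then show "reach F T a b \<Longrightarrow> reach F T' a b" using rtranclp_mono by blast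
qed

lemma comp_eq: "reach E T x z \<Longrightarrow> cmpt E T x = cmpt E T z"
  unfolding cmpt_def
  by (auto intro: rtranclp_trans reach_sym)

lemma comp_eq_iff: "cmpt E T x = cmpt E T z \<longleftrightarrow> reach E T x z"
  using comp_eq[of E T x z] unfolding cmpt_def by auto

lemma kap_empty: "kap {} T = card T"
proof -
  have r: "erel {} T = (\<lambda>a b. False)" by (auto simp: erel_def fun_eq_iff)
  have f: "(\<lambda>a b. False)\<^sup>*\<^sup>* x y \<Longrightarrow> y = x" for x y :: 'a
    by (induction rule: rtranclp_induct) auto
  have "cmpt {} T = (\<lambda>x. {x})" using f by (auto simp: cmpt_def r fun_eq_iff)
  then show ?thesis unfolding kap_def by (simp add: card_image)
qed

lemma kap_cong: "(\<And>a b. a \<in> T \<Longrightarrow> b \<in> T \<Longrightarrow> {a,b} \<in> E \<longleftrightarrow> {a,b} \<in> E') \<Longrightarrow> kap E T = kap E' T"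
proof -
  assume "\<And>a b. a \<in> T \<Longrightarrow> b \<in> T \<Longrightarrow> {a,b} \<in> E \<longleftrightarrow> {a,b} \<in> E'"
  then have "erel E T = erel E' T" by (auto simp: erel_def fun_eq_iff)
  then show ?thesis by (simp add: kap_def cmpt_def)
qed

lemma kap_one: "T \<noteq> {} \<Longrightarrow> (\<And>u v. u \<in> T \<Longrightarrow> v \<in> T \<Longrightarrow> reach E T u v) \<Longrightarrow> kap E T = 1"
proof -
  assume ne: "T \<noteq> {}" and c: "\<And>u v. u \<in> T \<Longrightarrow> v \<in> T \<Longrightarrow> reach E T u v"
  obtain t where t: "t \<in> T" using ne by auto
  have "cmpt E T ` T = {cmpt E T t}"
    using t c comp_eq by fastforce
  then show ?thesis by (simp add: kap_def)
qed

lemma reach_insert_same: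
  assumes "\<not> (x \<in> T \<and> y \<in> T) \<or> reach F T x y"
  shows "reach (insert {x,y} F) T = reach F T"
proof (intro ext iffI)
  fix a b assume "reach (insert {x,y} F) T a b"
  then show "reach F T a b"
  proof (induction rule: rtranclp_induct)
    case base then show ?case by simp
  next
    case (step b c)
    show ?case
    proof (cases "erel F T b c")
      case True then show ?thesis using step by (meson rtranclp.rtrancl_into_rtrancl)
    next
      case False
      then have "{b,c} = {x,y}" "b \<in> T" "c \<in> T" using step(2) by (auto simp: erel_def)
      then have "reach F T b c" using assms
        by (metis doubleton_eq_iff reach_sym)
      then show ?thesis using step by (meson rtranclp_trans)
    qed
  qed
next
  fix a b assume "reach F T a b"
  then show "reach (insert {x,y} F) T a b" by (rule reach_mono_E[rotated]) auto
qed

lemma reach_insert_new: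
  assumes "x \<in> T" "y \<in> T"
  shows "reach (insert {x,y} F) T a b \<longleftrightarrow>
     reach F T a b \<or> (reach F T a x \<and> reach F T y b) \<or> (reach F T a y \<and> reach F T x b)"
proof
  assume "reach (insert {x,y} F) T a b"
  then show "reach F T a b \<or> (reach F T a x \<and> reach F T y b) \<or> (reach F T a y \<and> reach F T x b)"
  proof (induction rule: rtranclp_induct)
    case base then show ?case by simp
  next
    case (step b c)
    show ?case
    proof (cases "erel F T b c")
      case True then show ?thesis using step by (meson rtranclp.rtrancl_into_rtrancl)
    next
      case False
      then have "{b,c} = {x,y}" using step(2) by (auto simp: erel_def)
      then have bc: "(b = x \<and> c = y) \<or> (b = y \<and> c = x)" by (metis doubleton_eq_iff)
      show ?thesis using step(3) bc
        by (metis reach_sym rtranclp.rtrancl_refl rtranclp_trans)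
    qed
  qed
next
  have e: "erel (insert {x,y} F) T x y" "erel (insert {x,y} F) T y x"
    using assms by (auto simp: erel_def insert_commute)
  have m: "\<And>a b. reach F T a b \<Longrightarrow> reach (insert {x,y} F) T a b"
    by (rule reach_mono_E[rotated]) auto
  assume "reach F T a b \<or> (reach F T a x \<and> reach F T y b) \<or> (reach F T a y \<and> reach F T x b)"
  then show "reach (insert {x,y} F) T a b"
    by (meson e m r_into_rtranclp rtranclp_trans)
qed

lemma kap_insert:
  assumes fin: "finite T"
  shows "int (kap (insert {x,y} F) T) =
     int (kap F T) - (if x \<in> T \<and> y \<in> T \<and> \<not> reach F T x y then 1 else 0)"
proof (cases "x \<in> T \<and> y \<in> T \<and> \<not> reach F T x y")
  case False
  then have "\<not> (x \<in> T \<and> y \<in> T) \<or> reach F T x y" by blast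
  then have eq: "reach (insert {x,y} F) T = reach F T" by (rule reach_insert_same)
  have "kap (insert {x,y} F) T = kap F T" unfolding kap_def cmpt_def eq ..
  then show ?thesis using False by simp
next
  case True
  then have xT: "x \<in> T" and yT: "y \<in> T" and nr: "\<not> reach F T x y" by auto
  define cx where "cx = cmpt F T x"
  define cy where "cy = cmpt F T y"
  have R: "\<And>a b. reach (insert {x,y} F) T a b \<longleftrightarrow>
     reach F T a b \<or> (reach F T a x \<and> reach F T y b) \<or> (reach F T a y \<and> reach F T x b)"
    using reach_insert_new[OF xT yT] by blast
  have incx: "z \<in> cx \<longleftrightarrow> reach F T x z" for z unfolding cx_def cmpt_def by simp
  have incy: "z \<in> cy \<longleftrightarrow> reach F T y z" for z unfolding cy_def cmpt_def by simp
  have tr: "\<And>a b c. reach F T a b \<Longrightarrow> reach F T b c \<Longrightarrow> reach F T a c"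
    by (rule rtranclp_trans)
  have sy: "\<And>a b. reach F T a b \<Longrightarrow> reach F T b a" by (rule reach_sym)
  have C1: "cmpt (insert {x,y} F) T z = cx \<union> cy" if zx: "reach F T z x" for z
  proof (rule set_eqI)
    fix w
    have nzy: "\<not> reach F T z y" using zx nr tr sy by blast
    have "w \<in> cmpt (insert {x,y} F) T z \<longleftrightarrow> reach (insert {x,y} F) T z w"
      unfolding cmpt_def by simp
    also have "\<dots> \<longleftrightarrow> reach F T z w \<or> reach F T y w"
      using R[of z w] zx nzy by blast
    also have "\<dots> \<longleftrightarrow> reach F T x w \<or> reach F T y w"
      using zx tr sy by blast
    finally show "w \<in> cmpt (insert {x,y} F) T z \<longleftrightarrow> w \<in> cx \<union> cy"
      using incx incy by blast
  qed
  have C2: "cmpt (insert {x,y} F) T z = cx \<union> cy" if zy: "reach F T z y" for z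
  proof (rule set_eqI)
    fix w
    have nzx: "\<not> reach F T z x" using zy nr tr sy by blast
    have "w \<in> cmpt (insert {x,y} F) T z \<longleftrightarrow> reach (insert {x,y} F) T z w"
      unfolding cmpt_def by simp
    also have "\<dots> \<longleftrightarrow> reach F T z w \<or> reach F T x w"
      using R[of z w] zy nzx by blast
    also have "\<dots> \<longleftrightarrow> reach F T y w \<or> reach F T x w"
      using zy tr sy by blast
    finally show "w \<in> cmpt (insert {x,y} F) T z \<longleftrightarrow> w \<in> cx \<union> cy"
      using incx incy by blast
  qed
  have C3: "cmpt (insert {x,y} F) T z = cmpt F T z" if "\<not> reach F T z x" "\<not> reach F T z y" for z
    using R that unfolding cmpt_def by blast
  have inU: "z \<in> cx \<union> cy \<longleftrightarrow> reach F T z x \<or> reach F T z y" for z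
    using incx incy sy by blast
  have cxy: "cx \<noteq> cy" using nr unfolding cx_def cy_def comp_eq_iff .
  have img: "cmpt (insert {x,y} F) T ` T = insert (cx \<union> cy) (cmpt F T ` T - {cx, cy})"
  proof
    show "cmpt (insert {x,y} F) T ` T \<subseteq> insert (cx \<union> cy) (cmpt F T ` T - {cx, cy})"
    proof
      fix c assume "c \<in> cmpt (insert {x,y} F) T ` T"
      then obtain z where z: "z \<in> T" "c = cmpt (insert {x,y} F) T z" by auto
      show "c \<in> insert (cx \<union> cy) (cmpt F T ` T - {cx, cy})"
      proof (cases "reach F T z x \<or> reach F T z y")
        case True then show ?thesis using z C1 C2 by blast
      next
        case False
        then have "cmpt F T z \<noteq> cx" "cmpt F T z \<noteq> cy"
          unfolding cx_def cy_def comp_eq_iff by auto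
        then show ?thesis using z C3 False by auto
      qed
    qed
  next
    show "insert (cx \<union> cy) (cmpt F T ` T - {cx, cy}) \<subseteq> cmpt (insert {x,y} F) T ` T"
    proof
      fix c assume c: "c \<in> insert (cx \<union> cy) (cmpt F T ` T - {cx, cy})"
      show "c \<in> cmpt (insert {x,y} F) T ` T"
      proof (cases "c = cx \<union> cy")
        case True
        have "c = cmpt (insert {x,y} F) T x" using C1[of x] True by simp
        then show ?thesis using xT by blast
      next
        case False
        then obtain z where z: "z \<in> T" "c = cmpt F T z" "c \<noteq> cx" "c \<noteq> cy" using c by auto
        then have "\<not> reach F T z x" "\<not> reach F T z y"
          unfolding cx_def cy_def using comp_eq_iff by metis+
        then show ?thesis using C3[of z] z by auto
      qed
    qed
  qed
  have fin2: "finite (cmpt F T ` T)" using fin by simp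
  have inx: "cx \<in> cmpt F T ` T" "cy \<in> cmpt F T ` T" using xT yT cx_def cy_def by auto
  have nin: "cx \<union> cy \<notin> cmpt F T ` T - {cx, cy}"
  proof
    assume "cx \<union> cy \<in> cmpt F T ` T - {cx, cy}"
    then obtain z where z: "z \<in> T" "cx \<union> cy = cmpt F T z" "cmpt F T z \<noteq> cx" by auto
    have "x \<in> cx" using incx by simp
    then have "x \<in> cmpt F T z" using z(2) by auto
    then have "reach F T z x" unfolding cmpt_def by simp
    then have "cmpt F T z = cx" unfolding cx_def using comp_eq_iff by metis
    then show False using z by simp
  qed
  have "card (cmpt (insert {x,y} F) T ` T) = Suc (card (cmpt F T ` T - {cx, cy}))"
    using img nin fin2 by simp
  moreover have "card (cmpt F T ` T - {cx, cy}) = card (cmpt F T ` T) - 2"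
    using inx cxy fin2 by (simp add: card_Diff_subset)
  moreover have "card (cmpt F T ` T) \<ge> 2"
  proof -
    have "{cx, cy} \<subseteq> cmpt F T ` T" using inx by auto
    then have "card {cx,cy} \<le> card (cmpt F T ` T)" using fin2 card_mono by blast
    then show ?thesis using cxy by simp
  qed
  ultimately show ?thesis using True unfolding kap_def by simp
qed




lemma path_reach:
  assumes "path_within E S u v"
  shows "reach E S u v"
proof -
  obtain p where p: "p \<noteq> []" "hd p = u" "last p = v" "set p \<subseteq> S"
    "\<And>i. Suc i < length p \<Longrightarrow> {p ! i, p ! Suc i} \<in> E"
    using assms unfolding path_within_def by blast
  have "i < length p \<Longrightarrow> reach E S u (p ! i)" for i
  proof (induction i)
    case 0 then show ?case using p by (simp add: hd_conv_nth)
  next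
    case (Suc i)
    then have "erel E S (p ! i) (p ! Suc i)" using p unfolding erel_def
      by (meson Suc_lessD nth_mem subsetD)
    then show ?case using Suc by (meson Suc_lessD rtranclp.rtrancl_into_rtrancl)
  qed
  moreover have "length p - 1 < length p" using p by simp
  ultimately have "reach E S u (p ! (length p - 1))" by blast
  then show ?thesis using p by (simp add: last_conv_nth)
qed

lemma reach_path:
  assumes "reach E S u v" "u \<in> S"
  shows "path_within E S u v"
  using assms(1)
proof (induction rule: rtranclp_induct)
  case base
  then show ?case unfolding path_within_def using assms(2)
    by (intro exI[of _ "[u]"]) auto
next
  case (step a b)
  obtain p where p: "p \<noteq> []" "hd p = u" "last p = a" "distinct p" "set p \<subseteq> S"
    "\<And>i. Suc i < length p \<Longrightarrow> {p ! i, p ! Suc i} \<in> E"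
    using step(3) unfolding path_within_def by blast
  have ab: "{a,b} \<in> E" "b \<in> S" using step(2) unfolding erel_def by auto
  show ?case
  proof (cases "b \<in> set p")
    case True
    then obtain j where j: "j < length p" "p ! j = b" by (meson in_set_conv_nth)
    define q where "q = take (Suc j) p"
    have "q \<noteq> []" "hd q = u" using p j by (auto simp: q_def)
    moreover have "last q = b" using j by (simp add: q_def take_Suc_conv_app_nth)
    moreover have "distinct q" "set q \<subseteq> S" using p by (auto simp: q_def dest: in_set_takeD)
    moreover have "\<forall>i. Suc i < length q \<longrightarrow> {q ! i, q ! Suc i} \<in> E"
      using p(6) j by (auto simp: q_def)
    ultimately show ?thesis unfolding path_within_def by blast
  next
    case False
    define q where "q = p @ [b]"
    have "q \<noteq> []" "hd q = u" "last q = b" using p by (auto simp: q_def)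
    moreover have "distinct q" "set q \<subseteq> S" using p False ab by (auto simp: q_def)
    moreover have "\<forall>i. Suc i < length q \<longrightarrow> {q ! i, q ! Suc i} \<in> E"
    proof (intro allI impI)
      fix i assume i: "Suc i < length q"
      show "{q ! i, q ! Suc i} \<in> E"
      proof (cases "Suc i < length p")
        case True then show ?thesis using p(6) by (simp add: q_def nth_append)
      next
        case False
        then have "i = length p - 1" "Suc i = length p" using i by (auto simp: q_def)
        then show ?thesis using p ab
          by (simp add: q_def nth_append last_conv_nth)
      qed
    qed
    ultimately show ?thesis unfolding path_within_def by blast
  qed
qed

lemma bridge_extract:
  assumes "reach E T u v" "\<not> reach (E - {e}) T u v" "e = {x,y}"
  shows "x \<in> T \<and> y \<in> T \<and> \<not> reach (E - {e}) T x y"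
proof (rule ccontr)
  assume H: "\<not> (x \<in> T \<and> y \<in> T \<and> \<not> reach (E - {e}) T x y)"
  have "reach E T a b \<Longrightarrow> reach (E - {e}) T a b" for a b
  proof (induction rule: rtranclp_induct)
    case base then show ?case by simp
  next
    case (step b c)
    show ?case
    proof (cases "{b,c} = e")
      case False
      then have "erel (E - {e}) T b c" using step(2) unfolding erel_def by auto
      then show ?thesis using step(3) by (meson rtranclp.rtrancl_into_rtrancl)
    next
      case True
      then have "b \<in> T" "c \<in> T" using step(2) unfolding erel_def by auto
      have bc: "(b = x \<and> c = y) \<or> (b = y \<and> c = x)" using True assms(3) doubleton_eq_iff by fast
      then have "x \<in> T" "y \<in> T" using \<open>b \<in> T\<close> \<open>c \<in> T\<close> by auto
      then have xy: "reach (E - {e}) T x y" using H by blast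
      note bc
      then have "reach (E - {e}) T b c" using xy reach_sym[OF xy] by (elim disjE) auto
      then show ?thesis using step(3) by (meson rtranclp_trans)
    qed
  qed
  then show False using assms by blast
qed




lemma edge_form:
  assumes "simple_graph V E" "e \<in> E"
  obtains x y where "e = {x,y}" "x \<noteq> y" "x \<in> V" "y \<in> V"
proof -
  have "e \<subseteq> V" "card e = 2" using assms unfolding simple_graph_def by auto
  then obtain x y where "e = {x,y}" "x \<noteq> y" by (meson card_2_iff)
  then show ?thesis using that \<open>e \<subseteq> V\<close> by auto
qed

lemma witness:
  assumes "minimal_vca_connected V E col" "e \<in> E" "e = {x,y}"
  shows "\<exists>T. (T = V \<or> (\<exists>c. T = {w\<in>V. col w \<noteq> c})) \<and> x \<in> T \<and> y \<in> T \<and> \<not> reach (E - {e}) T x y"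
proof -
  have vc: "vca_connected V E col" and nv: "\<not> vca_connected V (E - {e}) col"
    using assms unfolding minimal_vca_connected_def by auto
  obtain u v c where uv: "u \<in> V" "v \<in> V" and n: "\<not> vertex_c_avoiding_connected V (E - {e}) col c u v"
    using nv unfolding vca_connected_def by blast
  have y: "vertex_c_avoiding_connected V E col c u v" using vc uv unfolding vca_connected_def by blast
  show ?thesis
  proof (cases "path_within (E - {e}) V u v")
    case False
    have "path_within E V u v" using y unfolding vertex_c_avoiding_connected_def by blast
    then have "reach E V u v" by (rule path_reach)
    moreover have "\<not> reach (E - {e}) V u v" using False reach_path[OF _ uv(1)] by blast
    ultimately have "x \<in> V \<and> y \<in> V \<and> \<not> reach (E - {e}) V x y" by (rule bridge_extract[OF _ _ assms(3)])
    then show ?thesis by blast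
  next
    case True
    define S where "S = {w\<in>V. col w \<noteq> c}"
    have "col u \<noteq> c" "col v \<noteq> c" "\<not> path_within (E - {e}) S u v"
      using n True unfolding vertex_c_avoiding_connected_def S_def by auto
    moreover have "path_within E S u v" using y calculation unfolding vertex_c_avoiding_connected_def S_def by auto
    then have r: "reach E S u v" by (rule path_reach)
    have uS: "u \<in> S" using uv \<open>col u \<noteq> c\<close> unfolding S_def by simp
    have "\<not> reach (E - {e}) S u v" using \<open>\<not> path_within (E - {e}) S u v\<close> reach_path[OF _ uS] by blast
    then have "x \<in> S \<and> y \<in> S \<and> \<not> reach (E - {e}) S x y" by (rule bridge_extract[OF r _ assms(3)])
    then show ?thesis unfolding S_def by blast
  qed
qed

lemma conn_V:
  assumes "vca_connected V E col" "u \<in> V" "v \<in> V"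
  shows "reach E V u v"
proof -
  have "path_within E V u v" using assms unfolding vca_connected_def vertex_c_avoiding_connected_def by blast
  then show ?thesis by (rule path_reach)
qed

lemma conn_S:
  assumes "vca_connected V E col" "u \<in> V" "v \<in> V" "col u \<noteq> c" "col v \<noteq> c"
  shows "reach E {w\<in>V. col w \<noteq> c} u v"
proof -
  have "path_within E {w\<in>V. col w \<noteq> c} u v" using assms unfolding vca_connected_def vertex_c_avoiding_connected_def by blast
  then show ?thesis by (rule path_reach)
qed

lemma witness2:
  assumes "minimal_vca_connected V E col" "e \<in> E" "e = {x,y}" "F \<subseteq> E - {e}"
  shows "\<exists>T. (T = V \<or> (\<exists>c\<in>col ` V. T = {w\<in>V. col w \<noteq> c})) \<and> x \<in> T \<and> y \<in> T \<and> \<not> reach F T x y"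
proof -
  obtain T where T: "T = V \<or> (\<exists>c. T = {w\<in>V. col w \<noteq> c})" "x \<in> T" "y \<in> T" "\<not> reach (E - {e}) T x y"
    using witness[OF assms(1-3)] by blast
  have nr: "\<not> reach F T x y" using T(4) reach_mono_E[OF assms(4)] by blast
  show ?thesis
  proof (cases "T = V")
    case True then show ?thesis using T nr by blast
  next
    case False
    then obtain c where c: "T = {w\<in>V. col w \<noteq> c}" using T by blast
    have "c \<in> col ` V"
    proof (rule ccontr)
      assume "c \<notin> col ` V"
      then have "\<forall>w\<in>V. col w \<noteq> c" by auto
      then have "T = V" using c by blast
      then show False using False by simp
    qed
    then have "\<exists>c\<in>col ` V. T = {w\<in>V. col w \<noteq> c}" using c by blast
    then show ?thesis using T(2,3) nr by blast
  qed
qed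

lemma card_Sd_sum:
  assumes "finite V"
  shows "(\<Sum>d\<in>col ` V. card {w\<in>V. col w \<noteq> d}) + card V = card (col ` V) * card V"
proof -
  have a: "card {w\<in>V. col w \<noteq> d} + card {w\<in>V. col w = d} = card V" for d
  proof -
    have "{w\<in>V. col w \<noteq> d} \<union> {w\<in>V. col w = d} = V" by auto
    moreover have "{w\<in>V. col w \<noteq> d} \<inter> {w\<in>V. col w = d} = {}" by auto
    ultimately show ?thesis using assms by (metis (no_types, lifting) card_Un_disjoint finite_Un)
  qed
  have b: "(\<Sum>d\<in>col ` V. card {w\<in>V. col w = d}) = card V"
  proof -
    have "card V = (\<Sum>w\<in>V. 1)" by simp
    also have "\<dots> = (\<Sum>d\<in>col ` V. \<Sum>w\<in>{w\<in>V. col w = d}. 1)"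
      using sum.image_gen[OF assms, of "\<lambda>_. 1::nat" col] by simp
    finally show ?thesis by simp
  qed
  have "(\<Sum>d\<in>col ` V. card {w\<in>V. col w \<noteq> d}) + (\<Sum>d\<in>col ` V. card {w\<in>V. col w = d})
        = (\<Sum>d\<in>col ` V. card V)"
    by (simp add: a sum.distrib[symmetric])
  then show ?thesis using b by simp
qed




lemma fin_E: "simple_graph V E \<Longrightarrow> finite E"
proof -
  assume "simple_graph V E"
  then have "E \<subseteq> Pow V" "finite V" unfolding simple_graph_def by auto
  then show "finite E" by (meson finite_Pow_iff finite_subset)
qed

lemma part1_k2:
  assumes sg: "simple_graph V E" and mv: "minimal_vca_connected V E col" and k2: "card (col ` V) \<ge> 2"
  shows "card E + 3 \<le> 2 * card V"
proof -
  have finV: "finite V" using sg unfolding simple_graph_def by auto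
  have finE: "finite E" using sg by (rule fin_E)
  have vc: "vca_connected V E col" using mv unfolding minimal_vca_connected_def by auto
  define C where "C = col ` V"
  define k where "k = card C"
  define S where "S d = {w\<in>V. col w \<noteq> d}" for d
  define Phi where "Phi F = (\<Sum>d\<in>C. int (card (S d)) - int (kap F (S d)))
      - (int k - 3) * (int (card V) - int (kap F V))" for F
  have finC: "finite C" using finV C_def by simp
  have finS: "finite (S d)" for d using finV S_def by simp
  have SV: "S d \<subseteq> V" for d using S_def by auto
  have ind: "int (card F) \<le> Phi F" if "F \<subseteq> E" for F
  proof -
    have "finite F" using that finE finite_subset by blast
    then show ?thesis using that
    proof (induction F rule: finite_subset_induct')
      case empty
      show ?case by (simp add: Phi_def kap_empty)
    next
      case (insert a F)
      obtain x y where xy: "a = {x,y}" "x \<noteq> y" "x \<in> V" "y \<in> V"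
        using edge_form[OF sg insert(2)] by blast
      define \<delta> where "\<delta> T = (if x \<in> T \<and> y \<in> T \<and> \<not> reach F T x y then 1 else 0 :: int)" for T
      have K: "int (kap (insert a F) T) = int (kap F T) - \<delta> T" if "finite T" for T
        unfolding xy(1) \<delta>_def using kap_insert[OF that] by simp
      have dnn: "\<delta> T \<ge> 0" for T by (simp add: \<delta>_def)
      have FE: "F \<subseteq> E - {a}" using insert by auto
      have P: "Phi (insert a F) = Phi F + (\<Sum>d\<in>C. \<delta> (S d)) - (int k - 3) * \<delta> V"
      proof -
        have "Phi (insert a F) = (\<Sum>d\<in>C. int (card (S d)) - (int (kap F (S d)) - \<delta> (S d)))
             - (int k - 3) * (int (card V) - (int (kap F V) - \<delta> V))"
          unfolding Phi_def using K finS finV by simp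
        also have "(\<Sum>d\<in>C. int (card (S d)) - (int (kap F (S d)) - \<delta> (S d)))
            = (\<Sum>d\<in>C. int (card (S d)) - int (kap F (S d))) + (\<Sum>d\<in>C. \<delta> (S d))"
          by (simp add: sum.distrib[symmetric] algebra_simps)
        finally show ?thesis unfolding Phi_def by (simp add: algebra_simps)
      qed
      have key: "(\<Sum>d\<in>C. \<delta> (S d)) - (int k - 3) * \<delta> V \<ge> 1"
      proof (cases "reach F V x y")
        case False
        then have dV: "\<delta> V = 1" using xy by (simp add: \<delta>_def)
        define D where "D = C - {col x, col y}"
        have "\<delta> (S d) = 1" if "d \<in> D" for d
        proof -
          have "x \<in> S d" "y \<in> S d" using that xy unfolding D_def S_def by auto
          moreover have "\<not> reach F (S d) x y" using False reach_mono_T[OF SV] by blast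
          ultimately show ?thesis by (simp add: \<delta>_def)
        qed
        then have sD: "(\<Sum>d\<in>D. \<delta> (S d)) = int (card D)" by simp
        have "(\<Sum>d\<in>D. \<delta> (S d)) \<le> (\<Sum>d\<in>C. \<delta> (S d))"
          by (rule sum_mono2[OF finC]) (auto simp: D_def dnn)
        moreover have "card C - 2 \<le> card D"
        proof -
          have "card C - card {col x, col y} \<le> card D" unfolding D_def
            by (rule diff_card_le_card_Diff) simp
          moreover have "card {col x, col y} \<le> 2" by (simp add: card_insert_le_m1)
          ultimately show ?thesis by linarith
        qed
        ultimately have "(\<Sum>d\<in>C. \<delta> (S d)) \<ge> int k - 2" using sD unfolding k_def by linarith
        then show ?thesis using dV by simp
      next
        case True
        then have dV: "\<delta> V = 0" by (simp add: \<delta>_def)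
        obtain T where T: "T = V \<or> (\<exists>c\<in>col ` V. T = {w\<in>V. col w \<noteq> c})" "x \<in> T" "y \<in> T" "\<not> reach F T x y"
          using witness2[OF mv insert(2) xy(1) FE] by blast
        have "T \<noteq> V" using T True by blast
        then obtain c where c: "c \<in> C" "T = S c" using T(1) unfolding C_def S_def by blast
        have "\<delta> (S c) = 1" using T c by (simp add: \<delta>_def)
        moreover have "\<delta> (S c) \<le> (\<Sum>d\<in>C. \<delta> (S d))"
          by (rule member_le_sum[OF c(1)]) (auto simp: dnn finC)
        ultimately show ?thesis using dV by simp
      qed
      have "card (insert a F) = Suc (card F)" using insert(1,4) by simp
      then have "int (card (insert a F)) = int (card F) + 1" by simp
      then show ?case using P key insert(5) by linarith
    qed
  qed
  have "int (card E) \<le> Phi E" by (rule ind) simp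
  moreover have "Phi E = 2 * int (card V) - 3"
  proof -
    have Vne: "V \<noteq> {}" using k2 by auto
    have kV: "kap E V = 1" by (rule kap_one[OF Vne]) (rule conn_V[OF vc], auto)
    have kS: "kap E (S d) = 1" if "d \<in> C" for d
    proof -
      obtain d' where d': "d' \<in> C" "d' \<noteq> d"
      proof -
        have "\<not> C \<subseteq> {d}"
        proof
          assume "C \<subseteq> {d}"
          then have "card C \<le> card {d}" by (rule card_mono[rotated]) simp
          then show False using k2 C_def by simp
        qed
        then show ?thesis using that by blast
      qed
      then obtain w where w: "w \<in> V" "col w = d'" unfolding C_def by blast
      have "S d \<noteq> {}" using w d' S_def by auto
      then show ?thesis
        by (rule kap_one) (unfold S_def, rule conn_S[OF vc], auto)
    qed
    have sumS: "(\<Sum>d\<in>C. card (S d)) + card V = k * card V"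
      using card_Sd_sum[OF finV, of col] unfolding C_def k_def S_def by simp
    have "Phi E = (\<Sum>d\<in>C. int (card (S d)) - 1) - (int k - 3) * (int (card V) - 1)"
      unfolding Phi_def using kV kS by simp
    also have "(\<Sum>d\<in>C. int (card (S d)) - 1) = int (\<Sum>d\<in>C. card (S d)) - int k"
      by (simp add: sum_subtractf k_def)
    also have "int (\<Sum>d\<in>C. card (S d)) = int k * int (card V) - int (card V)"
      using sumS by (metis add_diff_cancel_right' of_nat_add of_nat_mult)
    finally show ?thesis by (simp add: algebra_simps)
  qed
  ultimately show ?thesis by linarith
qed




lemma reach_cong:
  "(\<And>a b. a \<in> T \<Longrightarrow> b \<in> T \<Longrightarrow> {a,b} \<in> E \<longleftrightarrow> {a,b} \<in> E') \<Longrightarrow> reach E T = reach E' T"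
proof -
  assume "\<And>a b. a \<in> T \<Longrightarrow> b \<in> T \<Longrightarrow> {a,b} \<in> E \<longleftrightarrow> {a,b} \<in> E'"
  then have "erel E T = erel E' T" by (auto simp: erel_def fun_eq_iff)
  then show ?thesis by simp
qed

lemma if01: "(if P then (1::int) else 0) \<le> 1" by simp

lemma single_T:
  assumes fT: "finite T" and E'E: "E' \<subseteq> E" and fE': "finite E'"
  and W: "\<And>e. e \<in> E' \<Longrightarrow> \<exists>x y. e = {x,y} \<and> x \<in> T \<and> y \<in> T \<and> \<not> reach (E - {e}) T x y"
  shows "card E' + kap E' T \<le> card T"
proof -
  have "card F + kap F T \<le> card T" if "F \<subseteq> E'" for F
  proof -
    have "finite F" using that fE' finite_subset by blast
    then show ?thesis using that
    proof (induction F rule: finite_subset_induct')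
      case empty
      show ?case by (simp add: kap_empty)
    next
      case (insert a F)
      obtain x y where xy: "a = {x,y}" "x \<in> T" "y \<in> T" "\<not> reach (E - {a}) T x y"
        using W[OF insert(2)] by blast
      have FE: "F \<subseteq> E - {a}" using insert(3,4) E'E by blast
      have nr: "\<not> reach F T x y" using xy(4) reach_mono_E[OF FE] by blast
      have cnd: "x \<in> T \<and> y \<in> T \<and> \<not> reach F T x y" using xy(2,3) nr by blast
      have "int (kap (insert {x,y} F) T) = int (kap F T) - 1"
        using kap_insert[OF fT, of x y F] cnd by (simp only: cnd simp_thms if_True)
      then have "int (kap (insert a F) T) = int (kap F T) - 1" using xy(1) by simp
      moreover have "card (insert a F) = Suc (card F)" using insert(1,4) by simp
      ultimately show ?case using insert(5) by linarith
    qed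
  qed
  then show ?thesis by simp
qed

lemma lower_bound:
  assumes sg: "simple_graph V E"
  shows "card V \<le> card E + kap E V"
proof -
  have finV: "finite V" using sg unfolding simple_graph_def by auto
  have "card V \<le> card F + kap F V" if "F \<subseteq> E" for F
  proof -
    have "finite F" using that fin_E[OF sg] finite_subset by blast
    then show ?thesis using that
    proof (induction F rule: finite_subset_induct')
      case empty
      show ?case by (simp add: kap_empty)
    next
      case (insert a F)
      obtain x y where xy: "a = {x,y}" using edge_form[OF sg insert(2)] by blast
      have "int (kap (insert {x,y} F) V) \<ge> int (kap F V) - 1"
        using kap_insert[OF finV, of x y F] if01[of "x \<in> V \<and> y \<in> V \<and> \<not> reach F V x y"] by linarith
      then have "int (kap (insert a F) V) \<ge> int (kap F V) - 1" using xy by simp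
      moreover have "card (insert a F) = Suc (card F)" using insert(1,4) by simp
      ultimately show ?case using insert(5) by linarith
    qed
  qed
  then show ?thesis by simp
qed

lemma part3:
  assumes sg: "simple_graph V E" and n2: "card V \<ge> 2" and mv: "minimal_vca_connected V E col"
    and k12: "card (col ` V) \<in> {1, 2}"
  shows "card E = card V - 1"
proof -
  have finV: "finite V" using sg unfolding simple_graph_def by auto
  have finE: "finite E" using sg by (rule fin_E)
  have vc: "vca_connected V E col" using mv unfolding minimal_vca_connected_def by auto
  have Vne: "V \<noteq> {}" using n2 by auto
  have kV: "kap E V = 1" by (rule kap_one[OF Vne]) (rule conn_V[OF vc], auto)
  have lo: "card V \<le> card E + 1" using lower_bound[OF sg] kV by simp
  have up: "card E + 1 \<le> card V"
  proof (cases "card (col ` V) = 1")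
    case True
    then obtain a where a: "col ` V = {a}" by (meson card_1_singletonE)
    have W: "\<exists>x y. e = {x,y} \<and> x \<in> V \<and> y \<in> V \<and> \<not> reach (E - {e}) V x y" if e: "e \<in> E" for e
    proof -
      obtain x y where xy: "e = {x,y}" "x \<in> V" "y \<in> V" using edge_form[OF sg e] by blast
      obtain T where T: "T = V \<or> (\<exists>c. T = {w\<in>V. col w \<noteq> c})" "x \<in> T" "y \<in> T"
          "\<not> reach (E - {e}) T x y"
        using witness[OF mv e xy(1)] by blast
      have "T = V"
      proof (cases "T = V")
        case False
        then obtain c where c: "T = {w\<in>V. col w \<noteq> c}" using T by blast
        have "col x = a" using a xy by auto
        then have "c \<noteq> a" using T(2) c by auto
        then have "\<forall>w\<in>V. col w \<noteq> c" using a by auto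
        then show ?thesis using c by blast
      qed
      then show ?thesis using T xy by blast
    qed
    have "card E + kap E V \<le> card V" by (rule single_T[OF finV subset_refl finE W])
    then show ?thesis using kV by simp
  next
    case False
    then have "card (col ` V) = 2" using k12 by simp
    then obtain a b where ab: "col ` V = {a,b}" "a \<noteq> b" by (meson card_2_iff)
    define A where "A = {w\<in>V. col w = a}"
    define B where "B = {w\<in>V. col w = b}"
    have AS: "A = {w\<in>V. col w \<noteq> b}" using ab unfolding A_def by auto
    have BS: "B = {w\<in>V. col w \<noteq> a}" using ab unfolding B_def by auto
    have AV: "A \<subseteq> V" "B \<subseteq> V" using A_def B_def by auto
    have finA: "finite A" "finite B" using finV A_def B_def by auto
    have Ane: "A \<noteq> {}" "B \<noteq> {}" using ab unfolding A_def B_def by (metis (mono_tags, lifting) empty_iff image_iff insertCI mem_Collect_eq)+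
    have cA: "reach E A u v" if "u \<in> A" "v \<in> A" for u v
      using conn_S[OF vc, of u v b] that unfolding AS by auto
    have cB: "reach E B u v" if "u \<in> B" "v \<in> B" for u v
      using conn_S[OF vc, of u v a] that unfolding BS by auto
    have kA: "kap E A = 1" by (rule kap_one[OF Ane(1)]) (rule cA)
    have kB: "kap E B = 1" by (rule kap_one[OF Ane(2)]) (rule cB)
    have colV: "col w = a \<or> col w = b" if "w \<in> V" for w using ab that by auto
    define E1 where "E1 = {e\<in>E. e \<subseteq> A}"
    define E2 where "E2 = {e\<in>E. e \<subseteq> B}"
    define E3 where "E3 = E - E1 - E2"
    have fin123: "finite E1" "finite E2" "finite E3" using finE E1_def E2_def E3_def by auto
    have WR: "\<exists>x y. e = {x,y} \<and> x \<in> R \<and> y \<in> R \<and> \<not> reach (E - {e}) R x y"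
      if e: "e \<in> E" "e \<subseteq> R" and RT: "\<And>c. R \<subseteq> V \<and> (e \<subseteq> {w\<in>V. col w \<noteq> c} \<longrightarrow> R \<subseteq> {w\<in>V. col w \<noteq> c})" for e R
    proof -
      obtain x y where xy: "e = {x,y}" "x \<in> V" "y \<in> V" using edge_form[OF sg e(1)] by blast
      obtain T where T: "T = V \<or> (\<exists>c. T = {w\<in>V. col w \<noteq> c})" "x \<in> T" "y \<in> T"
          "\<not> reach (E - {e}) T x y"
        using witness[OF mv e(1) xy(1)] by blast
      have RsT: "R \<subseteq> T"
      proof (cases "T = V")
        case True then show ?thesis using RT[of undefined] by simp
      next
        case False
        then obtain c where c: "T = {w\<in>V. col w \<noteq> c}" using T by blast
        have "e \<subseteq> T" using xy T by auto
        then show ?thesis using RT[of c] c by blast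
      qed
      have "\<not> reach (E - {e}) R x y" using T(4) reach_mono_T[OF RsT] by blast
      then show ?thesis using xy e by blast
    qed
    have c1: "card E1 + kap E1 A \<le> card A"
    proof (rule single_T[OF finA(1) _ fin123(1)])
      show "E1 \<subseteq> E" using E1_def by auto
    next
      fix e assume e: "e \<in> E1"
      show "\<exists>x y. e = {x,y} \<and> x \<in> A \<and> y \<in> A \<and> \<not> reach (E - {e}) A x y"
      proof (rule WR)
        show "e \<in> E" "e \<subseteq> A" using e E1_def by auto
      next
        fix c
        obtain x y where xy: "e = {x,y}" using edge_form[OF sg, of e] e E1_def by blast
        have "x \<in> A" using e xy E1_def by auto
        then show "A \<subseteq> V \<and> (e \<subseteq> {w\<in>V. col w \<noteq> c} \<longrightarrow> A \<subseteq> {w\<in>V. col w \<noteq> c})"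
          using xy AV unfolding A_def by auto
      qed
    qed
    have c2: "card E2 + kap E2 B \<le> card B"
    proof (rule single_T[OF finA(2) _ fin123(2)])
      show "E2 \<subseteq> E" using E2_def by auto
    next
      fix e assume e: "e \<in> E2"
      show "\<exists>x y. e = {x,y} \<and> x \<in> B \<and> y \<in> B \<and> \<not> reach (E - {e}) B x y"
      proof (rule WR)
        show "e \<in> E" "e \<subseteq> B" using e E2_def by auto
      next
        fix c
        obtain x y where xy: "e = {x,y}" using edge_form[OF sg, of e] e E2_def by blast
        have "x \<in> B" using e xy E2_def by auto
        then show "B \<subseteq> V \<and> (e \<subseteq> {w\<in>V. col w \<noteq> c} \<longrightarrow> B \<subseteq> {w\<in>V. col w \<noteq> c})"
          using xy AV unfolding B_def by auto
      qed
    qed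
    have k1: "kap E1 A = kap E A"
      by (rule kap_cong) (auto simp: E1_def)
    have k2: "kap E2 B = kap E B"
      by (rule kap_cong) (auto simp: E2_def)
    have cross: "\<exists>x y. e = {x,y} \<and> x \<in> A \<and> y \<in> B \<and> \<not> reach (E - {e}) V x y" if e: "e \<in> E3" for e
    proof -
      have eE: "e \<in> E" "\<not> e \<subseteq> A" "\<not> e \<subseteq> B" using e E1_def E2_def E3_def by auto
      obtain x y where xy: "e = {x,y}" "x \<in> V" "y \<in> V" using edge_form[OF sg eE(1)] by blast
      have "(x \<in> A \<and> y \<in> B) \<or> (y \<in> A \<and> x \<in> B)"
        using eE xy colV unfolding A_def B_def by auto
      then obtain x' y' where x'y': "e = {x',y'}" "x' \<in> A" "y' \<in> B"
        using xy by (metis insert_commute)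
      have "\<exists>x y. e = {x,y} \<and> x \<in> V \<and> y \<in> V \<and> \<not> reach (E - {e}) V x y"
      proof (rule WR)
        show "e \<in> E" "e \<subseteq> V" using eE xy by auto
      next
        fix c
        have "V \<subseteq> {w\<in>V. col w \<noteq> c}" if ec: "e \<subseteq> {w\<in>V. col w \<noteq> c}"
        proof -
          have "a \<noteq> c" "b \<noteq> c" using ec x'y' unfolding A_def B_def by auto
          then show ?thesis using colV by blast
        qed
        then show "V \<subseteq> V \<and> (e \<subseteq> {w\<in>V. col w \<noteq> c} \<longrightarrow> V \<subseteq> {w\<in>V. col w \<noteq> c})"
          by blast
      qed
      then obtain p q where pq: "e = {p,q}" "\<not> reach (E - {e}) V p q" by blast
      have "(p = x' \<and> q = y') \<or> (p = y' \<and> q = x')" using pq x'y' by (metis doubleton_eq_iff)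
      then have "\<not> reach (E - {e}) V x' y'" using pq(2) reach_sym by metis
      then show ?thesis using x'y' by blast
    qed
    have c3: "card E3 \<le> 1"
    proof -
      have "e1 = e2" if e12: "e1 \<in> E3" "e2 \<in> E3" for e1 e2
      proof (rule ccontr)
        assume ne: "e1 \<noteq> e2"
        obtain x1 y1 where 1: "e1 = {x1,y1}" "x1 \<in> A" "y1 \<in> B" "\<not> reach (E - {e1}) V x1 y1"
          using cross[OF e12(1)] by blast
        obtain x2 y2 where 2: "e2 = {x2,y2}" "x2 \<in> A" "y2 \<in> B"
          using cross[OF e12(2)] by blast
        have e1n: "\<not> e1 \<subseteq> A" "\<not> e1 \<subseteq> B" using e12 E1_def E2_def E3_def by auto
        have rA: "reach (E - {e1}) A = reach E A"
          by (rule reach_cong) (use e1n in auto)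
        have rB: "reach (E - {e1}) B = reach E B"
          by (rule reach_cong) (use e1n in auto)
        have s1: "reach (E - {e1}) V x1 x2"
          using cA[OF 1(2) 2(2)] rA reach_mono_T[OF AV(1)] by metis
        have s3: "reach (E - {e1}) V y2 y1"
          using cB[OF 2(3) 1(3)] rB reach_mono_T[OF AV(2)] by metis
        have "e2 \<in> E" using e12 E3_def by auto
        then have "erel (E - {e1}) V x2 y2" using 2 ne AV unfolding erel_def by auto
        then have s2: "reach (E - {e1}) V x2 y2" by simp
        have "reach (E - {e1}) V x1 y1" using s1 s2 s3 by (meson rtranclp_trans)
        then show False using 1 by blast
      qed
      then show ?thesis using fin123(3) by (simp add: card_le_Suc0_iff_eq)
    qed
    have "E = E1 \<union> E2 \<union> E3" "E1 \<inter> E2 = {}" "(E1 \<union> E2) \<inter> E3 = {}"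
    proof -
      show "E = E1 \<union> E2 \<union> E3" using E1_def E2_def E3_def by auto
      show "(E1 \<union> E2) \<inter> E3 = {}" using E3_def by auto
      show "E1 \<inter> E2 = {}"
      proof (rule ccontr)
        assume "E1 \<inter> E2 \<noteq> {}"
        then obtain e where "e \<in> E" "e \<subseteq> A" "e \<subseteq> B" using E1_def E2_def by auto
        moreover obtain x y where "e = {x,y}" using edge_form[OF sg \<open>e \<in> E\<close>] by blast
        ultimately show False using ab unfolding A_def B_def by auto
      qed
    qed
    then have cE: "card E = card E1 + card E2 + card E3"
      using fin123 by (metis card_Un_disjoint finite_UnI)
    have "A \<union> B = V" "A \<inter> B = {}" using colV ab unfolding A_def B_def by auto
    then have "card A + card B = card V" using finA by (metis card_Un_disjoint)
    then show ?thesis using cE c1 c2 c3 k1 k2 kA kB by linarith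
  qed
  show ?thesis using lo up by linarith
qed




lemma hub_conn:
  assumes "h \<in> S" "\<And>w. w \<in> S \<Longrightarrow> w \<noteq> h \<Longrightarrow> {h,w} \<in> E" "u \<in> S" "v \<in> S"
  shows "reach E S u v"
proof -
  have toh: "reach E S h w" if "w \<in> S" for w
  proof (cases "w = h")
    case True then show ?thesis by simp
  next
    case False
    then have "erel E S h w" using assms(1,2) that unfolding erel_def by auto
    then show ?thesis by simp
  qed
  show ?thesis by (rule rtranclp_trans[OF reach_sym[OF toh[OF assms(3)]] toh[OF assms(4)]])
qed

lemma cut_lemma:
  assumes "reach F S u v" "u \<in> A" "\<And>a b. erel F S a b \<Longrightarrow> a \<in> A \<Longrightarrow> b \<in> A"
  shows "v \<in> A"
  using assms(1)
proof (induction rule: rtranclp_induct)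
  case base then show ?case using assms(2) .
next
  case (step b c) show ?case by (rule assms(3)[OF step(2) step(3)])
qed

definition VV :: "nat \<Rightarrow> nat set" where "VV n = {0..<n}"
definition cc :: "nat \<Rightarrow> nat" where "cc x = (if x = 0 then 0 else if x = 1 then 1 else 2)"
definition EE :: "nat \<Rightarrow> nat set set" where
  "EE n = insert {0,1} ((\<lambda>x. {0,x}) ` {2..<n} \<union> (\<lambda>x. {1,x}) ` {2..<n})"

lemma EE_x:
  assumes "{p,x} \<in> EE n" "x \<ge> 2" "p \<noteq> x"
  shows "p = 0 \<or> p = 1"
proof -
  from assms(1) consider (a) "{p,x} = {0,1}" | (b) y where "{p,x} = {0,y}" | (c) y where "{p,x} = {1,y}"
    unfolding EE_def by blast
  then show ?thesis
  proof cases
    case a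
    have "x \<in> {0,1}" by (subst a[symmetric]) simp
    then show ?thesis using assms(2) by simp
  next
    case (b y)
    have p: "p \<in> {0,y}" by (subst b[symmetric]) simp
    have x: "x \<in> {0,y}" by (subst b[symmetric]) simp
    then have "x = y" using assms(2) by simp
    then show ?thesis using p assms(3) by simp
  next
    case (c y)
    have p: "p \<in> {1,y}" by (subst c[symmetric]) simp
    have x: "x \<in> {1,y}" by (subst c[symmetric]) simp
    then have "x = y" using assms(2) by simp
    then show ?thesis using p assms(3) by simp
  qed
qed

lemma part2:
  assumes n3: "n \<ge> 3"
  shows "simple_graph (VV n) (EE n) \<and> card (VV n) = n \<and> card (cc ` VV n) = 3 \<and>
         minimal_vca_connected (VV n) (EE n) cc \<and> card (EE n) = 2 * n - 3"
proof -
  let ?V = "VV n" and ?E = "EE n"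
  have sg: "simple_graph ?V ?E"
    unfolding simple_graph_def VV_def EE_def using n3 by auto
  have cV: "card ?V = n" by (simp add: VV_def)
  have colimg: "cc ` ?V = {0,1,2}"
  proof
    show "cc ` ?V \<subseteq> {0,1,2}" by (auto simp: cc_def)
  next
    have "0 \<in> ?V" "1 \<in> ?V" "2 \<in> ?V" using n3 by (auto simp: VV_def)
    moreover have "cc 0 = 0" "cc 1 = 1" "cc 2 = 2" by (auto simp: cc_def)
    ultimately show "{0,1,2} \<subseteq> cc ` ?V" by (metis empty_subsetI image_eqI insert_subset)
  qed
  have ccard: "card (cc ` ?V) = 3" using colimg by simp
  have cE: "card ?E = 2 * n - 3"
  proof -
    have i0: "inj_on (\<lambda>x::nat. {0,x}) {2..<n}"
    proof (rule inj_onI)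
      fix x y :: nat assume "x \<in> {2..<n}" "y \<in> {2..<n}" and eq: "{0,x} = {0,y}"
      have "x \<in> {0,y}" by (subst eq[symmetric]) simp
      then show "x = y" using \<open>x \<in> {2..<n}\<close> by simp
    qed
    have i1: "inj_on (\<lambda>x::nat. {1,x}) {2..<n}"
    proof (rule inj_onI)
      fix x y :: nat assume "x \<in> {2..<n}" "y \<in> {2..<n}" and eq: "{1,x} = {1,y}"
      have "x \<in> {1,y}" by (subst eq[symmetric]) simp
      then show "x = y" using \<open>x \<in> {2..<n}\<close> by simp
    qed
    have ne: "{0::nat,x} \<noteq> {1,y}" if "y \<ge> 2" for x y
    proof
      assume eq: "{0::nat,x} = {1,y}"
      have "(0::nat) \<in> {1,y}" by (subst eq[symmetric]) simp
      then show False using that by simp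
    qed
    have d: "(\<lambda>x::nat. {0,x}) ` {2..<n} \<inter> (\<lambda>x. {1,x}) ` {2..<n} = {}"
    proof (rule ccontr)
      assume "(\<lambda>x::nat. {0,x}) ` {2..<n} \<inter> (\<lambda>x. {1,x}) ` {2..<n} \<noteq> {}"
      then obtain x y where "x \<in> {2..<n}" "y \<in> {2..<n}" "{0::nat,x} = {1,y}" by blast
      then show False using ne[of y x] by simp
    qed
    have nin: "{0::nat,1} \<notin> (\<lambda>x. {0,x}) ` {2..<n} \<union> (\<lambda>x. {1,x}) ` {2..<n}"
    proof
      assume "{0::nat,1} \<in> (\<lambda>x. {0,x}) ` {2..<n} \<union> (\<lambda>x. {1,x}) ` {2..<n}"
      then have "{0::nat,1} \<in> (\<lambda>x. {0,x}) ` {2..<n} \<or> {0::nat,1} \<in> (\<lambda>x. {1,x}) ` {2..<n}"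
        by (simp only: Un_iff)
      then show False
      proof
        assume "{0::nat,1} \<in> (\<lambda>x. {0,x}) ` {2..<n}"
        then obtain x where x: "x \<in> {2..<n}" and eq: "{0::nat,1} = {0,x}" by (rule imageE)
        have "(1::nat) \<in> {0,x}" by (subst eq[symmetric]) simp
        then show False using x by simp
      next
        assume "{0::nat,1} \<in> (\<lambda>x. {1,x}) ` {2..<n}"
        then obtain x where x: "x \<in> {2..<n}" and eq: "{0::nat,1} = {1,x}" by (rule imageE)
        have "(0::nat) \<in> {1,x}" by (subst eq[symmetric]) simp
        then show False using x by simp
      qed
    qed
    have "card ((\<lambda>x::nat. {0,x}) ` {2..<n} \<union> (\<lambda>x. {1,x}) ` {2..<n}) = (n - 2) + (n - 2)"
      using card_Un_disjoint[OF _ _ d] card_image[OF i0] card_image[OF i1] by simp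
    then show ?thesis unfolding EE_def using nin n3 by simp
  qed
  have E01: "{0,1} \<in> ?E" "{1,0} \<in> ?E" by (auto simp: EE_def insert_commute)
  have E0x: "{0,w} \<in> ?E" if "w \<in> ?V" "w \<noteq> 0" "w \<noteq> 1" for w
    using that by (auto simp: EE_def VV_def)
  have E1x: "{1,w} \<in> ?E" if "w \<in> ?V" "w \<noteq> 0" "w \<noteq> 1" for w
    using that by (auto simp: EE_def VV_def)
  have hub1: "reach ?E T u v" if "T \<subseteq> ?V" "1 \<in> T" "u \<in> T" "v \<in> T" for T u v
  proof (rule hub_conn[OF that(2) _ that(3,4)])
    fix w assume "w \<in> T" "w \<noteq> 1"
    then show "{1,w} \<in> ?E" using E01 E1x that(1) by (cases "w = 0") auto
  qed
  have hub0: "reach ?E T u v" if "T \<subseteq> ?V" "0 \<in> T" "u \<in> T" "v \<in> T" for T u v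
  proof (rule hub_conn[OF that(2) _ that(3,4)])
    fix w assume "w \<in> T" "w \<noteq> 0"
    then show "{0,w} \<in> ?E" using E01 E0x that(1) by (cases "w = 1") auto
  qed
  have one: "1 \<in> ?V" "0 \<in> ?V" using n3 by (auto simp: VV_def)
  have vc: "vca_connected ?V ?E cc"
    unfolding vca_connected_def vertex_c_avoiding_connected_def
  proof (intro ballI allI conjI)
    fix u v c assume uv: "u \<in> ?V" "v \<in> ?V"
    show "path_within ?E ?V u v" by (rule reach_path[OF hub1[OF subset_refl one(1) uv] uv(1)])
    show "cc u = c \<or> cc v = c \<or> path_within ?E {w \<in> ?V. cc w \<noteq> c} u v"
    proof (cases "cc u = c \<or> cc v = c")
      case True then show ?thesis by blast
    next
      case False
      let ?T = "{w \<in> ?V. cc w \<noteq> c}"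
      have uvT: "u \<in> ?T" "v \<in> ?T" using uv False by auto
      have "reach ?E ?T u v"
      proof (cases "c = 1")
        case True
        have z: "0 \<in> ?T" using one True by (simp add: cc_def)
        show ?thesis by (rule hub0[OF _ z uvT]) blast
      next
        case False
        have z: "1 \<in> ?T" using one False by (simp add: cc_def)
        show ?thesis by (rule hub1[OF _ z uvT]) blast
      qed
      then show ?thesis using reach_path[OF _ uvT(1)] by blast
    qed
  qed
  have notc: "\<not> vca_connected ?V (?E - {e}) cc" if e: "e \<in> ?E" for e
  proof -
    have gen: "\<not> vca_connected ?V (?E - {e}) cc"
      if "u \<in> ?V" "v \<in> ?V" "cc u \<noteq> c" "cc v \<noteq> c" "\<not> reach (?E - {e}) {w \<in> ?V. cc w \<noteq> c} u v" for u v c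
    proof
      assume "vca_connected ?V (?E - {e}) cc"
      then have "path_within (?E - {e}) {w \<in> ?V. cc w \<noteq> c} u v"
        using that unfolding vca_connected_def vertex_c_avoiding_connected_def by blast
      then show False using that(5) path_reach[of "?E - {e}"] by blast
    qed
    consider (a) "e = {0,1}" | (b) x where "e = {0,x}" "x \<in> {2..<n}" | (c) x where "e = {1,x}" "x \<in> {2..<n}"
      using e unfolding EE_def by blast
    then show ?thesis
    proof cases
      case a
      have "\<not> reach (?E - {e}) {w \<in> ?V. cc w \<noteq> 2} 0 1"
      proof
        assume r: "reach (?E - {e}) {w \<in> ?V. cc w \<noteq> 2} 0 1"
        have "(1::nat) \<in> {0}"
        proof (rule cut_lemma[OF r])
          fix p q assume pq: "erel (?E - {e}) {w \<in> ?V. cc w \<noteq> 2} p q" "p \<in> {0::nat}"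
          then have "{p,q} \<in> ?E" "{p,q} \<noteq> {0,1}" "q \<in> ?V" "cc q \<noteq> 2" using a unfolding erel_def by auto
          then show "q \<in> {0}" using pq(2) unfolding EE_def cc_def by (auto simp: doubleton_eq_iff split: if_splits)
        qed simp
        then show False by simp
      qed
      then show ?thesis using gen[of 0 1 2] one by (simp add: cc_def)
    next
      case (b x)
      have "\<not> reach (?E - {e}) {w \<in> ?V. cc w \<noteq> 1} 0 x"
      proof
        assume r: "reach (?E - {e}) {w \<in> ?V. cc w \<noteq> 1} 0 x"
        have "x \<in> {w. w \<noteq> x}"
        proof (rule cut_lemma[OF r])
          fix p q assume pq: "erel (?E - {e}) {w \<in> ?V. cc w \<noteq> 1} p q" "p \<in> {w. w \<noteq> x}"
          then have "{p,q} \<in> ?E" "{p,q} \<noteq> {0,x}" "p \<in> ?V" "cc p \<noteq> 1" "p \<noteq> x" using b unfolding erel_def by auto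
          then have h: "{p,q} \<in> ?E" "{p,q} \<noteq> {0,x}" "cc p \<noteq> 1" "p \<noteq> x" by auto
          show "q \<in> {w. w \<noteq> x}"
          proof
            show "q \<noteq> x"
            proof
              assume "q = x"
              then have "p = 0 \<or> p = 1" using EE_x[of p x n] h b(2) by simp
              then show False using h \<open>q = x\<close> by (auto simp: cc_def)
            qed
          qed
        qed (use b in simp)
        then show False by simp
      qed
      moreover have "x \<in> ?V" "cc x = 2" using b by (auto simp: VV_def cc_def)
      ultimately show ?thesis using gen[of 0 x 1] one by (simp add: cc_def)
    next
      case (c x)
      have "\<not> reach (?E - {e}) {w \<in> ?V. cc w \<noteq> 0} 1 x"
      proof
        assume r: "reach (?E - {e}) {w \<in> ?V. cc w \<noteq> 0} 1 x"
        have "x \<in> {w. w \<noteq> x}"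
        proof (rule cut_lemma[OF r])
          fix p q assume pq: "erel (?E - {e}) {w \<in> ?V. cc w \<noteq> 0} p q" "p \<in> {w. w \<noteq> x}"
          then have "{p,q} \<in> ?E" "{p,q} \<noteq> {1,x}" "p \<in> ?V" "cc p \<noteq> 0" "p \<noteq> x" using c unfolding erel_def by auto
          then have h: "{p,q} \<in> ?E" "{p,q} \<noteq> {1,x}" "cc p \<noteq> 0" "p \<noteq> x" by auto
          show "q \<in> {w. w \<noteq> x}"
          proof
            show "q \<noteq> x"
            proof
              assume "q = x"
              then have "p = 0 \<or> p = 1" using EE_x[of p x n] h c(2) by simp
              then show False using h \<open>q = x\<close> by (auto simp: cc_def)
            qed
          qed
        qed (use c in simp)
        then show False by simp
      qed
      moreover have "x \<in> ?V" "cc x = 2" using c by (auto simp: VV_def cc_def)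
      ultimately show ?thesis using gen[of 1 x 0] one by (simp add: cc_def)
    qed
  qed
  have "minimal_vca_connected ?V ?E cc" unfolding minimal_vca_connected_def using vc notc by blast
  then show ?thesis using sg cV ccard cE by blast
qed


theorem corollary3p15:
  shows "(\<forall>(V::'a set) E (col::'a \<Rightarrow> 'b).
            simple_graph V E \<and> card V \<ge> 2 \<and> minimal_vca_connected V E col
            \<longrightarrow> card E \<le> 2 * card V - 3)
       \<and> (\<forall>n::nat. n \<ge> 3 \<longrightarrow>
            (\<exists>(V::nat set) E (col::nat \<Rightarrow> nat).
               simple_graph V E \<and> card V = n \<and> card (col ` V) = 3 \<and>
               minimal_vca_connected V E col \<and> card E = 2 * n - 3))
       \<and> (\<forall>(V::'a set) E (col::'a \<Rightarrow> 'b).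
            simple_graph V E \<and> card V \<ge> 2 \<and> minimal_vca_connected V E col \<and>
            card (col ` V) \<in> {1, 2}
            \<longrightarrow> card E = card V - 1)"
proof (intro conjI allI impI)
  fix V :: "'a set" and E and col :: "'a \<Rightarrow> 'b"
  assume H: "simple_graph V E \<and> card V \<ge> 2 \<and> minimal_vca_connected V E col"
  show "card E \<le> 2 * card V - 3"
  proof (cases "card (col ` V) \<ge> 2")
    case True
    then show ?thesis using part1_k2[of V E col] H by simp
  next
    case False
    have "V \<noteq> {}" using H by auto
    moreover have "finite V" using H unfolding simple_graph_def by auto
    ultimately have "card (col ` V) \<ge> 1" by (simp add: Suc_leI card_gt_0_iff)
    then have "card (col ` V) \<in> {1,2}" using False by simp
    then have "card E = card V - 1" using part3[of V E col] H by blast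
    then show ?thesis using H by simp
  qed
next
  fix n :: nat
  assume "n \<ge> 3"
  then show "\<exists>(V::nat set) E (col::nat \<Rightarrow> nat).
               simple_graph V E \<and> card V = n \<and> card (col ` V) = 3 \<and>
               minimal_vca_connected V E col \<and> card E = 2 * n - 3"
    using part2[of n] by blast
next
  fix V :: "'a set" and E and col :: "'a \<Rightarrow> 'b"
  assume H: "simple_graph V E \<and> card V \<ge> 2 \<and> minimal_vca_connected V E col \<and>
            card (col ` V) \<in> {1, 2}"
  then show "card E = card V - 1" using part3[of V E col] by blast
qed

end
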